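(* Let $K$ be an algebraically closed field, let $V$ be a finite-dimensional vector space over $K$ with $\dim V\geq 4$, and let $\omega$ be an alternating trilinear form on $V$. Then every two-dimensional subspace of $V$ contains a nonzero vector lying in some two-dimensional $\omega$-singular subspace of $V$.
   Context: A two-dimensional subspace $L\subseteq V$ is $\omega$-singular if $\omega(a,b,v)=0$ for all $a,b\in L$, $v\in V$. *)

theory Defs
  imports Main "HOL-Computational_Algebra.Polynomial"
begin

definition alg_closed_field :: "'k::field itself \<Rightarrow> bool" where
  "alg_closed_field _ \<longleftrightarrow> (\<forall>p :: 'k poly. 0 < degree p \<longrightarrow> (\<exists>x. poly p x = 0))"

definition alternating_trilinear ::
  "('k::field \<Rightarrow> 'v::ab_group_add \<Rightarrow> 'v) \<Rightarrow> ('v \<Rightarrow> 'v \<Rightarrow> 'v \<Rightarrow> 'k) \<Rightarrow> bool" where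
  "alternating_trilinear scale \<omega> \<longleftrightarrow>
     (\<forall>b c. Vector_Spaces.linear scale (*) (\<lambda>a. \<omega> a b c)) \<and>
     (\<forall>a c. Vector_Spaces.linear scale (*) (\<lambda>b. \<omega> a b c)) \<and>
     (\<forall>a b. Vector_Spaces.linear scale (*) (\<lambda>c. \<omega> a b c)) \<and>
     (\<forall>a c. \<omega> a a c = 0) \<and> (\<forall>a b. \<omega> a b b = 0) \<and> (\<forall>a b. \<omega> a b a = 0)"

definition omega_singular :: "('v \<Rightarrow> 'v \<Rightarrow> 'v \<Rightarrow> 'k::zero) \<Rightarrow> 'v set \<Rightarrow> bool" where
  "omega_singular \<omega> L \<longleftrightarrow> (\<forall>a\<in>L. \<forall>b\<in>L. \<forall>v. \<omega> a b v = 0)"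

end

theory Submission
  imports Defs
begin


locale vsx = vector_space scale
  for scale :: "'a::field \<Rightarrow> 'b::ab_group_add \<Rightarrow> 'b" (infixr \<open>*s\<close> 75)
begin

definition peval :: "'a poly \<Rightarrow> ('b \<Rightarrow> 'b) \<Rightarrow> 'b \<Rightarrow> 'b" where
  "peval p T v = (\<Sum>i\<le>degree p. coeff p i *s (T^^i) v)"

lemma peval_bound:
  fixes p :: "'a poly" assumes "degree p \<le> N" shows "peval p T v = (\<Sum>i\<le>N. coeff p i *s (T^^i) v)"
  unfolding peval_def
  by (rule sum.mono_neutral_left) (use assms in \<open>auto simp: coeff_eq_0\<close>)

lemma peval_add: "peval ((p::'a poly)+q) T v = peval p T v + peval q T v"
proof -
  let ?N = "max (degree p) (degree q)"
  have "peval (p+q) T v = (\<Sum>i\<le>?N. coeff (p+q) i *s (T^^i) v)"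
    by (rule peval_bound) (meson degree_add_le max.cobounded1 max.cobounded2)
  also have "\<dots> = (\<Sum>i\<le>?N. coeff p i *s (T^^i) v) + (\<Sum>i\<le>?N. coeff q i *s (T^^i) v)"
    by (simp add: scale_left_distrib sum.distrib)
  also have "\<dots> = peval p T v + peval q T v"
    using peval_bound[of p ?N T v] peval_bound[of q ?N T v] by simp
  finally show ?thesis .
qed

lemma peval_smult: "peval (smult a (p::'a poly)) T v = a *s peval p T v"
proof -
  have "peval (smult a p) T v = (\<Sum>i\<le>degree p. coeff (smult a p) i *s (T^^i) v)"
    by (rule peval_bound) (rule degree_smult_le)
  then show ?thesis by (simp add: peval_def scale_sum_right)
qed

lemma peval_pCons0:
  assumes lin: "Vector_Spaces.linear scale scale T"
  shows "peval (pCons 0 (q::'a poly)) T v = T (peval q T v)"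
proof -
  interpret L: Vector_Spaces.linear scale scale T by fact
  have "peval (pCons 0 q) T v = (\<Sum>i\<le>Suc (degree q). coeff (pCons 0 q) i *s (T^^i) v)"
    by (rule peval_bound) (simp add: degree_pCons_le)
  also have "\<dots> = (\<Sum>i\<le>degree q. coeff q i *s (T^^(Suc i)) v)"
    by (subst sum.atMost_Suc_shift) simp
  also have "\<dots> = T (peval q T v)"
    by (simp add: peval_def L.sum L.scale)
  finally show ?thesis .
qed

lemma peval_lin:
  assumes lin: "Vector_Spaces.linear scale scale T"
  shows "peval ([:-a,1:] * (q::'a poly)) T v = T (peval q T v) - a *s peval q T v"
proof -
  have "[:-a,1:] * q = smult (-a) q + pCons 0 q" by simp
  then have "peval ([:-a,1:] * q) T v = peval (smult (-a) q) T v + peval (pCons 0 q) T v"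
    by (simp only: peval_add)
  also have "\<dots> = (-a) *s peval q T v + T (peval q T v)"
    by (simp only: peval_smult peval_pCons0[OF lin])
  finally show ?thesis by (simp add: algebra_simps)
qed

lemma peval_span:
  assumes "\<And>i. (T^^i) v \<in> span C" shows "peval (p::'a poly) T v \<in> span C"
  unfolding peval_def by (intro span_sum span_scale assms)

lemma eig_aux:
  assumes alg: "alg_closed_field TYPE('a)"
    and lin: "Vector_Spaces.linear scale scale T"
    and pw: "\<And>i. (T^^i) v \<in> span C"
    and inv: "\<And>x. x \<in> span C \<Longrightarrow> T x \<in> span C"
  shows "(p::'a poly) \<noteq> 0 \<Longrightarrow> peval p T v = 0 \<Longrightarrow> v \<noteq> 0 \<Longrightarrow> \<exists>y\<in>span C. y \<noteq> 0 \<and> (\<exists>l. T y = l *s y)"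
proof (induction "degree p" arbitrary: p rule: less_induct)
  case less
  show ?case
  proof (cases "degree p = 0")
    case True
    then have "peval p T v = coeff p 0 *s v" by (simp add: peval_def)
    moreover have "coeff p 0 \<noteq> 0" using True less.prems(1) leading_coeff_neq_0[of p] by simp
    ultimately show ?thesis using less.prems by simp
  next
    case False
    then obtain a where "poly p a = 0" using alg unfolding alg_closed_field_def by blast
    then obtain q where pq: "p = [:-a,1:] * q" using poly_eq_0_iff_dvd by blast
    have q0: "q \<noteq> 0" using pq less.prems(1) by auto
    have "degree p = degree [:-a,1::'a:] + degree q" unfolding pq by (rule degree_mult_eq) (use q0 in auto)
    then have dq: "degree q < degree p" by simp
    let ?u = "peval q T v"
    have u: "?u \<in> span C" by (rule peval_span[OF pw])
    have "peval p T v = T ?u - a *s ?u" unfolding pq by (rule peval_lin[OF lin])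
    then have eq: "T ?u - a *s ?u = 0" using less.prems(2) by simp
    show ?thesis
    proof (cases "?u = 0")
      case True
      then have "peval q T v = 0" by simp
      from less.hyps[OF dq q0 this less.prems(3)] show ?thesis .
    next
      case False
      have "T ?u = a *s ?u" using eq by simp
      then show ?thesis using u False by blast
    qed
  qed
qed

lemma eigen_exists:
  assumes alg: "alg_closed_field TYPE('a)"
    and lin: "Vector_Spaces.linear scale scale T"
    and fin: "finite C"
    and inv: "\<And>x. x \<in> span C \<Longrightarrow> T x \<in> span C"
    and v: "v \<in> span C" "v \<noteq> 0"
  shows "\<exists>y\<in>span C. y \<noteq> 0 \<and> (\<exists>l. T y = l *s y)"
proof -
  define f where "f i = (T^^i) v" for i
  have pw: "f i \<in> span C" for i
    unfolding f_def by (induction i) (auto simp: v inv)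
  let ?d = "card C"
  have "\<exists>c. (\<exists>i\<le>?d. c i \<noteq> 0) \<and> (\<Sum>i\<le>?d. c i *s f i) = 0"
  proof (cases "inj_on f {..?d}")
    case True
    let ?F = "f ` {..?d}"
    have "card ?F = card {..?d}" by (rule card_image[OF True])
    then have cF: "card ?F = Suc ?d" by (simp only: card_atMost)
    have Fs: "?F \<subseteq> span C" using pw by auto
    have "\<not> independent ?F"
    proof
      assume "independent ?F"
      then have "card ?F \<le> ?d" using independent_span_bound[OF fin _ Fs] by simp
      then show False using cF by simp
    qed
    then have dF: "dependent ?F" by simp
    have finF: "finite ?F" by (rule finite_imageI[OF finite_atMost])
    obtain u where u: "\<exists>w\<in>?F. u w \<noteq> 0" "(\<Sum>w\<in>?F. u w *s w) = 0"
      using dF unfolding dependent_finite[OF finF] by blast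
    have s0: "(\<Sum>i\<le>?d. u (f i) *s f i) = 0"
      using u(2) sum.reindex[OF True, of "\<lambda>w. u w *s w"] by simp
    have ex: "\<exists>i\<le>?d. u (f i) \<noteq> 0" using u(1) by auto
    show ?thesis by (rule exI[where x="\<lambda>i. u (f i)"]) (simp only: s0 ex simp_thms)
  next
    case False
    then obtain i j where ij: "i \<le> ?d" "j \<le> ?d" "i \<noteq> j" "f i = f j"
      unfolding inj_on_def by auto
    define c where "c k = (if k = i then 1 else if k = j then -1 else (0::'a))" for k
    have "(\<lambda>k. c k *s f k) = (\<lambda>k. (if k = i then f i else 0) - (if k = j then f j else 0))"
      using ij by (auto simp: fun_eq_iff c_def)
    then have "(\<Sum>k\<le>?d. c k *s f k) = (\<Sum>k\<le>?d. (if k = i then f i else 0)) - (\<Sum>k\<le>?d. (if k = j then f j else 0))"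
      by (simp only: sum_subtractf)
    also have "\<dots> = f i - f j" using ij(1,2) by simp
    finally have "(\<Sum>k\<le>?d. c k *s f k) = 0" using ij(4) by simp
    moreover have "c i \<noteq> 0" by (simp add: c_def)
    ultimately show ?thesis using ij(1) by (intro exI[where x=c]) auto
  qed
  then obtain c where c: "\<exists>i\<le>?d. c i \<noteq> 0" "(\<Sum>i\<le>?d. c i *s f i) = 0" by blast
  define p where "p = (\<Sum>i\<le>?d. monom (c i) i)"
  have cp: "coeff p k = (if k \<le> ?d then c k else 0)" for k
    unfolding p_def by (simp add: coeff_sum coeff_monom)
  have p0: "p \<noteq> 0" using c(1) cp by (metis coeff_0)
  have dp: "degree p \<le> ?d" by (rule degree_le) (simp add: cp)
  have "peval p T v = (\<Sum>i\<le>?d. coeff p i *s (T^^i) v)" by (rule peval_bound[OF dp])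
  also have "\<dots> = (\<Sum>i\<le>?d. c i *s f i)" by (intro sum.cong) (auto simp: cp f_def)
  finally have "peval p T v = 0" using c(2) by simp
  then show ?thesis using eig_aux[OF alg lin _ inv p0] pw v(2) unfolding f_def by blast
qed

end



locale trilin = finite_dimensional_vector_space scale Basis + vsx scale
  for scale :: "'a::field \<Rightarrow> 'b::ab_group_add \<Rightarrow> 'b" (infixr \<open>*s\<close> 75) and Basis +
  fixes \<omega> :: "'b \<Rightarrow> 'b \<Rightarrow> 'b \<Rightarrow> 'a"
  assumes alt: "alternating_trilinear scale \<omega>"
begin

lemma add1: "\<omega> (x+y) b c = \<omega> x b c + \<omega> y b c"
  and add2: "\<omega> a (x+y) c = \<omega> a x c + \<omega> a y c"
  and add3: "\<omega> a b (x+y) = \<omega> a b x + \<omega> a b y"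
  and sc1: "\<omega> (k *s x) b c = k * \<omega> x b c"
  and sc2: "\<omega> a (k *s x) c = k * \<omega> a x c"
  and sc3: "\<omega> a b (k *s x) = k * \<omega> a b x"
  and aa: "\<omega> a a c = 0" and bb: "\<omega> a b b = 0" and ab: "\<omega> a b a = 0"
proof -
  have L: "\<forall>b c. Vector_Spaces.linear (*s) (*) (\<lambda>a. \<omega> a b c)"
    "\<forall>a c. Vector_Spaces.linear (*s) (*) (\<lambda>b. \<omega> a b c)"
    "\<forall>a b. Vector_Spaces.linear (*s) (*) (\<omega> a b)"
    and A: "\<forall>a c. \<omega> a a c = 0" "\<forall>a b. \<omega> a b b = 0" "\<forall>a b. \<omega> a b a = 0"
    using alt unfolding alternating_trilinear_def by auto
  note L' = L[unfolded Vector_Spaces.linear_iff]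
  show "\<omega> (x+y) b c = \<omega> x b c + \<omega> y b c" using L'(1) by blast
  show "\<omega> a (x+y) c = \<omega> a x c + \<omega> a y c" using L'(2) by blast
  show "\<omega> a b (x+y) = \<omega> a b x + \<omega> a b y" using L'(3) by blast
  show "\<omega> (k *s x) b c = k * \<omega> x b c" using L'(1) by blast
  show "\<omega> a (k *s x) c = k * \<omega> a x c" using L'(2) by blast
  show "\<omega> a b (k *s x) = k * \<omega> a b x" using L'(3) by blast
  show "\<omega> a a c = 0" "\<omega> a b b = 0" "\<omega> a b a = 0" using A by auto
qed

lemma zero1[simp]: "\<omega> 0 b c = 0" using sc1[of 0 0 b c] by simp
lemma zero2[simp]: "\<omega> a 0 c = 0" using sc2[of a 0 0 c] by simp
lemma zero3[simp]: "\<omega> a b 0 = 0" using sc3[of a b 0 0] by simp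

lemma diff1: "\<omega> (x-y) b c = \<omega> x b c - \<omega> y b c"
  using add1[of "x-y" y b c] by (simp add: algebra_simps)
lemma diff2: "\<omega> a (x-y) c = \<omega> a x c - \<omega> a y c"
  using add2[of a "x-y" y c] by (simp add: algebra_simps)
lemma diff3: "\<omega> a b (x-y) = \<omega> a b x - \<omega> a b y"
  using add3[of a b "x-y" y] by (simp add: algebra_simps)

lemma anti12: "\<omega> b a c = - \<omega> a b c"
proof -
  have "0 = \<omega> (a+b) (a+b) c" by (simp only: aa)
  also have "\<dots> = \<omega> a a c + \<omega> a b c + (\<omega> b a c + \<omega> b b c)"
    by (simp only: add1 add2 ac_simps)
  finally show ?thesis by (simp add: aa eq_neg_iff_add_eq_0 add.commute)
qed
lemma anti23: "\<omega> a c b = - \<omega> a b c"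
proof -
  have "0 = \<omega> a (b+c) (b+c)" by (simp only: bb)
  also have "\<dots> = \<omega> a b b + \<omega> a b c + (\<omega> a c b + \<omega> a c c)"
    by (simp only: add2 add3 ac_simps)
  finally show ?thesis by (simp add: bb eq_neg_iff_add_eq_0 add.commute)
qed
lemma anti13: "\<omega> c b a = - \<omega> a b c"
proof -
  have "0 = \<omega> (a+c) b (a+c)" by (simp only: ab)
  also have "\<dots> = \<omega> a b a + \<omega> a b c + (\<omega> c b a + \<omega> c b c)"
    by (simp only: add1 add3 ac_simps)
  finally show ?thesis by (simp add: ab eq_neg_iff_add_eq_0 add.commute)
qed

lemma sum1: "\<omega> (\<Sum>i\<in>I. f i) b c = (\<Sum>i\<in>I. \<omega> (f i) b c)"
  by (induction I rule: infinite_finite_induct) (auto simp: add1)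
lemma sum2: "\<omega> a (\<Sum>i\<in>I. f i) c = (\<Sum>i\<in>I. \<omega> a (f i) c)"
  by (induction I rule: infinite_finite_induct) (auto simp: add2)

lemma vanish3:
  assumes "\<And>v. v \<in> Basis \<Longrightarrow> \<omega> a b v = 0" shows "\<omega> a b v = 0"
proof -
  have "v \<in> span Basis" by (simp add: span_Basis)
  then show ?thesis
  proof (induction rule: span_induct)
    case base
    show ?case unfolding subspace_def by (auto simp: add3 sc3)
  qed (use assms in auto)
qed

definition Phi where "Phi e y = (\<Sum>b\<in>Basis. \<omega> e y b *s b)"

lemma Phi_add2: "Phi e (y+z) = Phi e y + Phi e z"
  unfolding Phi_def by (simp add: add2 scale_left_distrib sum.distrib)
lemma Phi_sc2: "Phi e (k *s y) = k *s Phi e y"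
  unfolding Phi_def by (simp add: sc2 scale_sum_right)
lemma Phi_add1: "Phi (e+f) y = Phi e y + Phi f y"
  unfolding Phi_def by (simp add: add1 scale_left_distrib sum.distrib)
lemma Phi_sc1: "Phi (k *s e) y = k *s Phi e y"
  unfolding Phi_def by (simp add: sc1 scale_sum_right)
lemma Phi_diff1: "Phi (e-f) y = Phi e y - Phi f y"
  unfolding Phi_def by (simp add: diff1 scale_left_diff_distrib sum_subtractf)
lemma Phi_diff2: "Phi e (y-z) = Phi e y - Phi e z"
  unfolding Phi_def by (simp add: diff2 scale_left_diff_distrib sum_subtractf)
lemma Phi_linear: "Vector_Spaces.linear scale scale (Phi e)"
  unfolding Vector_Spaces.linear_iff by (auto simp: Phi_add2 Phi_sc2 vector_space_axioms)
lemma Phi_zero[simp]: "Phi e 0 = 0" unfolding Phi_def by simp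
lemma Phi_self[simp]: "Phi e e = 0" unfolding Phi_def by (simp add: aa)
lemma Phi_anti: "Phi b a = - Phi a b"
  unfolding Phi_def by (simp add: anti12[where a=a and b=b] sum_negf)

lemma Phi_eq_0: "Phi e y = 0 \<longleftrightarrow> (\<forall>v. \<omega> e y v = 0)"
proof
  assume h: "Phi e y = 0"
  have "\<omega> e y b = 0" if "b \<in> Basis" for b
    using independentD[OF independent_Basis finite_Basis subset_refl h[unfolded Phi_def] that] .
  then show "\<forall>v. \<omega> e y v = 0" using vanish3 by blast
qed (simp add: Phi_def)

lemma Phi_coeff:
  assumes "Phi e y = Phi f z" "b \<in> Basis" shows "\<omega> e y b = \<omega> f z b"
proof -
  have "(\<Sum>b\<in>Basis. (\<omega> e y b - \<omega> f z b) *s b) = 0"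
    using assms(1) unfolding Phi_def by (simp add: scale_left_diff_distrib sum_subtractf)
  from independentD[OF independent_Basis finite_Basis subset_refl this assms(2)] show ?thesis by simp
qed

end



context trilin
begin

lemma span_disj:
  assumes S: "independent S" and A: "A \<subseteq> S" "A' \<subseteq> S" "A \<inter> A' = {}"
    and x: "x \<in> span A" "x \<in> span A'"
  shows "x = 0"
proof -
  have fS: "finite S" using S finiteI_independent by blast
  have iA: "independent A" "independent A'" "independent (A \<union> A')"
    using independent_mono[OF S] A by auto
  have fA: "finite A" "finite A'" using finite_subset[OF _ fS] A by auto
  have "dim {x + y |x y. x \<in> span A \<and> y \<in> span A'} + dim (span A \<inter> span A') = dim (span A) + dim (span A')"
    by (rule dim_sums_Int) (rule subspace_span)+
  moreover have "{x + y |x y. x \<in> span A \<and> y \<in> span A'} = span (A \<union> A')" by (simp add: span_Un)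
  moreover have "dim (span (A \<union> A')) = card A + card A'"
    using iA(3) dim_span_eq_card_independent card_Un_disjoint[OF fA A(3)] by simp
  moreover have "dim (span A) = card A" "dim (span A') = card A'"
    using iA dim_span_eq_card_independent by auto
  ultimately have "dim (span A \<inter> span A') = 0" by simp
  then have "span A \<inter> span A' \<subseteq> {0}" by (simp only: dim_eq_0)
  then show ?thesis using x by blast
qed

lemma sing2:
  assumes h: "\<forall>v. \<omega> x y v = 0" and ind: "independent {x,y}" and xy: "x \<noteq> y"
  shows "subspace (span {x,y}) \<and> dim (span {x,y}) = 2 \<and> omega_singular \<omega> (span {x,y}) \<and> x \<in> span {x,y}"
proof (intro conjI)
  show "subspace (span {x,y})" by simp
  show "dim (span {x,y}) = 2" using dim_span_eq_card_independent[OF ind] xy by simp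
  show "x \<in> span {x,y}" by (simp add: span_base)
  have mem: "\<exists>k m. a = k *s x + m *s y" if "a \<in> span {x,y}" for a
  proof -
    from that obtain k where "a - k *s x \<in> span {y}" using span_breakdown_eq by blast
    then obtain m where "a - k *s x = m *s y" using span_singleton by auto
    then have "a = k *s x + m *s y" by (simp add: algebra_simps)
    then show ?thesis by blast
  qed
  have yx: "\<omega> y x v = 0" for v using anti12[where a=x and b=y] h by simp
  show "omega_singular \<omega> (span {x,y})"
    unfolding omega_singular_def
  proof (intro ballI allI)
    fix a b v assume "a \<in> span {x,y}" "b \<in> span {x,y}"
    then obtain k m k' m' where "a = k *s x + m *s y" "b = k' *s x + m' *s y" using mem by blast
    then show "\<omega> a b v = 0" by (simp add: add1 add2 sc1 sc2 aa h yx)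
  qed
qed

lemma Phi_in_span:
  assumes "b \<in> Basis" "\<omega> e y b = 0" shows "Phi e y \<in> span (Basis - {b})"
proof -
  have "Phi e y = \<omega> e y b *s b + (\<Sum>b'\<in>Basis - {b}. \<omega> e y b' *s b')"
    unfolding Phi_def using sum.remove[OF finite_Basis assms(1)] by simp
  moreover have "(\<Sum>b'\<in>Basis - {b}. \<omega> e y b' *s b') \<in> span (Basis - {b})"
    by (intro span_sum span_scale span_base)
  ultimately show ?thesis using assms(2) by simp
qed

end



context trilin
begin

lemma surjB:
  assumes e2: "e2 \<in> Basis" and caseB: "\<forall>y. Phi e2 y = 0 \<longrightarrow> y \<in> span {e2}"
    and w: "w \<in> span (Basis - {e2})"
  shows "\<exists>z. Phi e2 z = w"
proof -
  let ?B' = "Basis - {e2}"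
  interpret P: finite_dimensional_vector_space_pair_1 scale Basis scale ..
  interpret L: Vector_Spaces.linear scale scale "Phi e2" by (rule Phi_linear)
  have inj: "inj_on (Phi e2) (span ?B')"
  proof (subst L.inj_on_iff_eq_0)
    show "subspace (span ?B')" by (rule subspace_span)
    show "\<forall>x\<in>span ?B'. Phi e2 x = 0 \<longrightarrow> x = 0"
    proof (intro ballI impI)
      fix x assume x: "x \<in> span ?B'" "Phi e2 x = 0"
      have x2: "x \<in> span {e2}" using caseB x(2) by blast
      show "x = 0" by (rule span_disj[OF independent_Basis _ _ _ x(1) x2]) (use e2 in auto)
    qed
  qed
  have "dim (Phi e2 ` span ?B') = dim (span ?B')"
    by (rule P.dim_image_eq[OF Phi_linear]) (simp only: span_span inj)
  moreover have sub: "Phi e2 ` span ?B' \<subseteq> span ?B'"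
  proof
    fix w assume "w \<in> Phi e2 ` span ?B'"
    then obtain y where "w = Phi e2 y" by blast
    moreover have "\<omega> e2 y e2 = 0" by (rule ab)
    ultimately show "w \<in> span ?B'" using Phi_in_span[OF e2] by simp
  qed
  moreover have "subspace (Phi e2 ` span ?B')" by (rule L.subspace_image) (rule subspace_span)
  ultimately have "Phi e2 ` span ?B' = span ?B'"
    using subspace_dim_equal[of "Phi e2 ` span ?B'" "span ?B'"] by simp
  then show ?thesis using w by (metis imageE)
qed

end



context trilin
begin

lemma main:
  assumes alg: "alg_closed_field TYPE('a)" and dim4: "card Basis \<ge> 4"
    and e1: "e1 \<in> Basis" and e2: "e2 \<in> Basis" and e12: "e1 \<noteq> e2"
  shows "\<exists>x\<in>span {e1,e2}. x \<noteq> 0 \<and> (\<exists>L. subspace L \<and> dim L = 2 \<and> omega_singular \<omega> L \<and> x \<in> L)"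
proof (cases "\<exists>y. Phi e2 y = 0 \<and> y \<notin> span {e2}")
  case True
  then obtain y where y: "Phi e2 y = 0" "y \<notin> span {e2}" by blast
  have e20: "e2 \<noteq> 0" using e2 independent_Basis dependent_zero by blast
  have ind: "independent {e2, y}"
  proof -
    have "independent {e2}" using e20 by simp
    then have "independent (insert y {e2})" using y(2) by (rule independent_insertI[rotated])
    then show ?thesis by (simp add: insert_commute)
  qed
  have ne: "e2 \<noteq> y" using y(2) span_base[of e2 "{e2}"] by auto
  have h: "\<forall>v. \<omega> e2 y v = 0" using y(1) Phi_eq_0 by blast
  have "e2 \<in> span {e1,e2}" by (simp add: span_base)
  with sing2[OF h ind ne] e20 show ?thesis by blast
next
  case False
  then have caseB: "\<forall>y. Phi e2 y = 0 \<longrightarrow> y \<in> span {e2}" by blast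

  have indB: "independent Basis" by (rule independent_Basis)
  have notin: "b \<notin> span (Basis - {b})" if "b \<in> Basis" for b
    using indB that unfolding dependent_def by blast
  have e20: "e2 \<noteq> 0" using e2 indB dependent_zero by blast
  let ?H = "{y. \<omega> e1 y e2 = 0}"
  have subH: "subspace ?H" unfolding subspace_def by (simp add: add2 sc2)
  let ?R = "Basis - {e1,e2}"
  have cR: "card ?R \<ge> 2"
  proof -
    have "card ?R = card Basis - card {e1,e2}"
      by (rule card_Diff_subset) (use e1 e2 finite_Basis in auto)
    then show ?thesis using dim4 e12 by simp
  qed
  have "?R \<noteq> {}"
  proof
    assume "?R = {}" then show False using cR by (simp only: card.empty)
  qed
  then obtain r1 where r1: "r1 \<in> ?R" by blast
  have "card (?R - {r1}) \<ge> 1" using cR r1 finite_Basis by simp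
  then have "?R - {r1} \<noteq> {}" by (metis card.empty not_one_le_zero)
  then obtain r2 where r2: "r2 \<in> ?R" "r2 \<noteq> r1" by blast
  have spE: "span {e1,e2} \<subseteq> span (Basis - {b})" if "b \<in> ?R" for b
    by (rule span_mono) (use that e1 e2 in auto)
  obtain c0 where c0: "c0 \<in> ?H" "c0 \<notin> span {e1,e2}"
  proof (cases "\<omega> e1 r1 e2 = 0")
    case True
    have "r1 \<notin> span {e1,e2}" using notin[of r1] spE[OF r1] r1 by blast
    then show ?thesis using that True by blast
  next
    case False
    let ?k = "\<omega> e1 r2 e2 / \<omega> e1 r1 e2"
    let ?c = "r2 - ?k *s r1"
    have "?c \<in> ?H" using False by (simp add: diff2 sc2)
    moreover have "?c \<notin> span {e1,e2}"
    proof
      assume "?c \<in> span {e1,e2}"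
      then have c1: "?c \<in> span (Basis - {r2})" using spE[OF r2(1)] by blast
      have "?k *s r1 \<in> span (Basis - {r2})" using r1 r2 by (intro span_scale span_base) auto
      then have "?c + ?k *s r1 \<in> span (Basis - {r2})" using c1 by (rule span_add[rotated])
      then have "r2 \<in> span (Basis - {r2})" by simp
      then show False using notin[of r2] r2 by blast
    qed
    ultimately show ?thesis using that by blast
  qed
  have ind12: "independent {e1,e2}" by (rule independent_mono[OF indB]) (use e1 e2 in auto)
  have ind3: "independent {c0,e1,e2}" by (rule independent_insertI[OF c0(2) ind12])
  have c0ne: "c0 \<noteq> e1" "c0 \<noteq> e2" using c0(2) span_base[of e1 "{e1,e2}"] span_base[of e2 "{e1,e2}"] by auto
  have sub3: "{c0,e1,e2} \<subseteq> ?H" using c0(1) by (simp add: aa bb)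
  obtain BH where BH: "{c0,e1,e2} \<subseteq> BH" "BH \<subseteq> ?H" "independent BH" "?H \<subseteq> span BH"
    using maximal_independent_subset_extend[OF sub3 ind3] by blast
  let ?C = "BH - {e1,e2}"
  have finC: "finite ?C" using BH(3) finiteI_independent by blast
  have indC: "independent ?C" using BH(3) by (rule independent_mono) auto
  have c0C: "c0 \<in> ?C" using BH(1) c0ne by auto
  have BHeq: "BH = insert e1 (insert e2 ?C)" using BH(1) by auto
  have CH: "?C \<subseteq> ?H" using BH(2) by auto
  have step: "\<forall>c\<in>?C. \<exists>w\<in>span ?C. \<exists>z a b. Phi e2 z = Phi e1 c \<and> z = a *s e1 + b *s e2 + w"
  proof
    fix c assume c: "c \<in> ?C"
    have "\<omega> e1 c e2 = 0" using c CH by blast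
    then have "Phi e1 c \<in> span (Basis - {e2})" by (rule Phi_in_span[OF e2])
    then obtain z where z: "Phi e2 z = Phi e1 c" using surjB[OF e2 caseB] by blast
    have "\<omega> e2 z e1 = \<omega> e1 c e1" by (rule Phi_coeff[OF z e1])
    then have "\<omega> e1 z e2 = 0" using anti13[where a=e1 and b=z and c=e2] ab[of e1 c] by simp
    then have "z \<in> span BH" using BH(4) by blast
    then have "z \<in> span (insert e1 (insert e2 ?C))" using BHeq by simp
    then obtain a where "z - a *s e1 \<in> span (insert e2 ?C)" using span_breakdown_eq by blast
    then obtain b where "z - a *s e1 - b *s e2 \<in> span ?C" using span_breakdown_eq by blast
    moreover have "z = a *s e1 + b *s e2 + (z - a *s e1 - b *s e2)" by (simp add: algebra_simps)
    ultimately show "\<exists>w\<in>span ?C. \<exists>z a b. Phi e2 z = Phi e1 c \<and> z = a *s e1 + b *s e2 + w"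
      using z by blast
  qed
  then obtain wf where wf: "\<forall>c\<in>?C. wf c \<in> span ?C \<and> (\<exists>z a b. Phi e2 z = Phi e1 c \<and> z = a *s e1 + b *s e2 + wf c)"
    by (metis (no_types, lifting))
  interpret P: vector_space_pair scale scale ..
  define T where "T = P.construct ?C wf"
  have linT: "Vector_Spaces.linear scale scale T" unfolding T_def by (rule P.linear_construct[OF indC])
  interpret LT: Vector_Spaces.linear scale scale T by (rule linT)
  have Tc: "T c = wf c" if "c \<in> ?C" for c unfolding T_def by (rule P.construct_basis[OF indC that])
  have inv: "T x \<in> span ?C" if "x \<in> span ?C" for x
    using that
  proof (induction rule: span_induct)
    case base
    show ?case unfolding subspace_def by (simp add: LT.add LT.scale span_add span_scale span_zero)
  next
    case (step x) then show ?case using Tc wf by simp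
  qed
  define PQ where "PQ y \<longleftrightarrow> (\<exists>z a b. Phi e2 z = Phi e1 y \<and> z = a *s e1 + b *s e2 + T y)" for y
  have Q0: "PQ 0" unfolding PQ_def
    by (rule exI[of _ 0], rule exI[of _ 0], rule exI[of _ 0]) simp
  have Qadd: "PQ (x + y)" if "PQ x" "PQ y" for x y
  proof -
    from that obtain z1 a1 b1 z2 a2 b2 where h: "Phi e2 z1 = Phi e1 x" "z1 = a1 *s e1 + b1 *s e2 + T x"
      "Phi e2 z2 = Phi e1 y" "z2 = a2 *s e1 + b2 *s e2 + T y" unfolding PQ_def by blast
    have "Phi e2 (z1 + z2) = Phi e1 (x + y)" using h by (simp add: Phi_add2)
    moreover have "z1 + z2 = (a1 + a2) *s e1 + (b1 + b2) *s e2 + T (x + y)"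
      using h by (simp add: LT.add scale_left_distrib algebra_simps)
    ultimately show ?thesis unfolding PQ_def by blast
  qed
  have Qsc: "PQ (k *s x)" if "PQ x" for k x
  proof -
    from that obtain z1 a1 b1 where h: "Phi e2 z1 = Phi e1 x" "z1 = a1 *s e1 + b1 *s e2 + T x"
      unfolding PQ_def by blast
    have "Phi e2 (k *s z1) = Phi e1 (k *s x)" using h by (simp add: Phi_sc2)
    moreover have "k *s z1 = (k * a1) *s e1 + (k * b1) *s e2 + T (k *s x)"
      using h by (simp add: LT.scale scale_right_distrib)
    ultimately show ?thesis unfolding PQ_def by blast
  qed
  have QC: "PQ c" if "c \<in> ?C" for c
    using that Tc wf unfolding PQ_def by simp
  have Q: "PQ y" if "y \<in> span ?C" for y
    using that
  proof (induction rule: span_induct)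
    case base
    show ?case unfolding subspace_def mem_Collect_eq using Q0 Qadd Qsc by blast
  next
    case (step c) then show ?case by (rule QC)
  qed
  have c0s: "c0 \<in> span ?C" using c0C by (rule span_base)
  have c00: "c0 \<noteq> 0" using c0(2) span_zero by auto
  obtain y l where y: "y \<in> span ?C" "y \<noteq> 0" "T y = l *s y"
    using eigen_exists[OF alg linT finC inv c0s c00] by blast
  obtain z a b where zab: "Phi e2 z = Phi e1 y" "z = a *s e1 + b *s e2 + T y" using Q[OF y(1)] unfolding PQ_def by blast
  define x where "x = e1 - l *s e2"
  define y' where "y' = y + a *s e2"
  have "Phi e1 y = a *s Phi e2 e1 + l *s Phi e2 y"
    using zab y(3) by (simp add: Phi_add2 Phi_sc2)
  moreover have "Phi e1 e2 = - Phi e2 e1" using Phi_anti[of e1 e2] by simp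
  ultimately have "Phi x y' = 0"
    unfolding x_def y'_def by (simp add: Phi_diff1 Phi_sc1 Phi_add2 Phi_sc2 algebra_simps)
  then have h: "\<forall>v. \<omega> x y' v = 0" using Phi_eq_0 by blast
  have x0: "x \<noteq> 0"
  proof
    assume "x = 0"
    then have "e1 = l *s e2" unfolding x_def by simp
    moreover have "l *s e2 \<in> span (Basis - {e1})" using e2 e12 by (intro span_scale span_base) auto
    ultimately show False using notin[OF e1] by simp
  qed
  have y'x: "y' \<notin> span {x}"
  proof
    assume "y' \<in> span {x}"
    then obtain k where "y' = k *s x" using span_singleton by auto
    then have "y = k *s e1 - (k * l + a) *s e2" unfolding x_def y'_def
      by (simp add: algebra_simps scale_right_diff_distrib)
    then have "y \<in> span {e1,e2}" by (simp add: span_diff span_scale span_base)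
    then have "y = 0" by (intro span_disj[OF BH(3) _ _ _ y(1)]) (use BH(1) in auto)
    then show False using y(2) by simp
  qed
  have ind: "independent {x, y'}"
  proof -
    have "independent {x}" using x0 by simp
    then have "independent (insert y' {x})" using y'x by (rule independent_insertI[rotated])
    then show ?thesis by (simp add: insert_commute)
  qed
  have ne: "x \<noteq> y'" using y'x span_base[of x "{x}"] by auto
  have "x \<in> span {e1,e2}" unfolding x_def by (simp add: span_diff span_scale span_base)
  with sing2[OF h ind ne] x0 show ?thesis by blast
qed

end


theorem mainTheorem6:
  fixes scale :: "'k::field \<Rightarrow> 'v::ab_group_add \<Rightarrow> 'v"
    and \<omega> :: "'v \<Rightarrow> 'v \<Rightarrow> 'v \<Rightarrow> 'k"
  assumes "alg_closed_field TYPE('k)"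
    and "vector_space scale"
    and "\<exists>B. finite B \<and> module.span scale B = UNIV"
    and "vector_space.dim scale (UNIV :: 'v set) \<ge> 4"
    and "alternating_trilinear scale \<omega>"
  shows "\<forall>W. module.subspace scale W \<and> vector_space.dim scale W = 2 \<longrightarrow>
           (\<exists>x\<in>W. x \<noteq> 0 \<and> (\<exists>L. module.subspace scale L \<and> vector_space.dim scale L = 2 \<and>
                                  omega_singular \<omega> L \<and> x \<in> L))"
proof (intro allI impI)
  fix W assume W: "module.subspace scale W \<and> vector_space.dim scale W = 2"
  interpret V: vector_space scale by (rule assms(2))
  obtain S where S: "finite S" "V.span S = UNIV" using assms(3) by blast
  obtain B2 where B2: "B2 \<subseteq> W" "V.independent B2" "W \<subseteq> V.span B2" "card B2 = V.dim W"
    using V.basis_exists[of W] by metis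
  have "card B2 = 2" using W B2(4) by (simp only:)
  then obtain e1 e2 where e: "B2 = {e1,e2}" "e1 \<noteq> e2" by (metis card_2_iff)
  have spW: "V.span {e1,e2} = W"
    using V.span_subspace[OF B2(1) B2(3)] W e(1) by (simp only:)
  have ind12: "V.independent {e1,e2}" using B2(2) unfolding e(1) .
  obtain Bas where Bas: "{e1,e2} \<subseteq> Bas" "V.independent Bas" "UNIV \<subseteq> V.span Bas"
    using V.maximal_independent_subset_extend[OF subset_UNIV ind12] by metis
  have finB: "finite Bas" using V.independent_span_bound[OF S(1) Bas(2)] S(2) by (simp only: subset_UNIV)
  interpret T: trilin scale Bas \<omega>
  proof unfold_locales
    show "finite Bas" by (rule finB)
    show "V.independent Bas" by (rule Bas(2))
    show "V.span Bas = UNIV" using Bas(3) by blast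
    show "alternating_trilinear scale \<omega>" by (rule assms(5))
  qed
  have "card Bas \<ge> 4" using assms(4) T.dim_UNIV by simp
  from T.main[OF assms(1) this _ _ e(2)] Bas(1) spW
  show "\<exists>x\<in>W. x \<noteq> 0 \<and> (\<exists>L. V.subspace L \<and> V.dim L = 2 \<and> omega_singular \<omega> L \<and> x \<in> L)"
    by blast
qed

end
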